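(* Let $H\in\mathcal K_r(n)$ and let $X\subseteq[n]$. Let $\mathcal A$ be the set of all hyperedges $A$ of $H$ with $X\subseteq A$ and $|A|\le n/2$. If $\mathcal A$ is nonempty, then $\bigcap_{A\in\mathcal A} A$ belongs to $\mathcal A$.
   Context: $\mathcal K_r(n)$ is the class of hypergraphs on vertex set $V=[n]$ (identified with their hyperedge sets $\mathcal E$) satisfying: (R0) every $X\subseteq V$ with $|X|\le r$ is in $\mathcal E$; (R1) $A\in\mathcal E\Rightarrow V\setminus A\in\mathcal E$; (R2) $A,B\in\mathcal E$ and $|A\cap B|\ge r\Rightarrow A\cup B\in\mathcal E$. *)

theory Defs
  imports Main
begin

text \<open>The class K_r(n): hypergraphs on vertex set V = {1..n}, identified with their
  hyperedge sets E (a set of subsets of V), satisfying (R0), (R1), (R2).\<close>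

definition K_class :: "nat \<Rightarrow> nat \<Rightarrow> nat set set \<Rightarrow> bool" where
  "K_class r n E \<longleftrightarrow>
     (\<forall>A\<in>E. A \<subseteq> {1..n}) \<and>
     (\<forall>X. X \<subseteq> {1..n} \<and> card X \<le> r \<longrightarrow> X \<in> E) \<and>
     (\<forall>A\<in>E. {1..n} - A \<in> E) \<and>
     (\<forall>A\<in>E. \<forall>B\<in>E. card (A \<inter> B) \<ge> r \<longrightarrow> A \<union> B \<in> E)"

end

theory Submission
  imports Defs
begin

lemma inter_closed:
  assumes "finite S" "S \<noteq> {}" "S \<subseteq> F" "\<And>A B. A \<in> F \<Longrightarrow> B \<in> F \<Longrightarrow> A \<inter> B \<in> F"
  shows "\<Inter> S \<in> F"
  using assms
proof (induction S rule: finite_ne_induct)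
  case (singleton x) then show ?case by simp
next
  case (insert x S) then show ?case by simp
qed

lemma pair_inter:
  assumes K: "K_class r n H" and A: "A \<in> H" and B: "B \<in> H"
    and cA: "2 * card A \<le> n" and cB: "2 * card B \<le> n"
  shows "A \<inter> B \<in> H"
proof -
  have sub: "\<forall>A\<in>H. A \<subseteq> {1..n}" and R0: "\<forall>X. X \<subseteq> {1..n} \<and> card X \<le> r \<longrightarrow> X \<in> H"
    and R1: "\<forall>A\<in>H. {1..n} - A \<in> H"
    and R2: "\<forall>A\<in>H. \<forall>B\<in>H. card (A \<inter> B) \<ge> r \<longrightarrow> A \<union> B \<in> H"
    using K unfolding K_class_def by auto
  have As: "A \<subseteq> {1..n}" and Bs: "B \<subseteq> {1..n}" using sub A B by auto
  have fA: "finite A" and fB: "finite B" using As Bs finite_subset[OF _ finite_atLeastAtMost] by blast+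
  show ?thesis
  proof (cases "card (A \<inter> B) \<le> r")
    case True then show ?thesis using R0 As by blast
  next
    case False
    have cu: "card (A \<union> B) + card (A \<inter> B) = card A + card B"
      using card_Un_Int[OF fA fB] by simp
    have "card ({1..n} - (A \<union> B)) = n - card (A \<union> B)"
      proof -
      have "A \<union> B \<subseteq> {1..n}" using As Bs by blast
      moreover have "finite (A \<union> B)" using fA fB by simp
      ultimately show ?thesis by (simp add: card_Diff_subset)
    qed
    also have "... \<ge> card (A \<inter> B)" using cu cA cB by linarith
    finally have "card (({1..n} - A) \<inter> ({1..n} - B)) \<ge> r" using False
      by (simp add: Diff_Un[symmetric])
    moreover have "{1..n} - A \<in> H" "{1..n} - B \<in> H" using R1 A B by blast+
    ultimately have "({1..n} - A) \<union> ({1..n} - B) \<in> H" using R2 by blast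
    then have "{1..n} - (({1..n} - A) \<union> ({1..n} - B)) \<in> H" using R1 by blast
    moreover have "{1..n} - (({1..n} - A) \<union> ({1..n} - B)) = A \<inter> B" using As Bs by auto
    ultimately show ?thesis by simp
  qed
qed

theorem mainTheorem10:
  fixes r n :: nat and H :: "nat set set" and X :: "nat set"
  assumes "K_class r n H"
    and "X \<subseteq> {1..n}"
    and "{A \<in> H. X \<subseteq> A \<and> 2 * card A \<le> n} \<noteq> {}"
  shows "\<Inter> {A \<in> H. X \<subseteq> A \<and> 2 * card A \<le> n} \<in> {A \<in> H. X \<subseteq> A \<and> 2 * card A \<le> n}"
proof (rule inter_closed)
  have "\<forall>A\<in>H. A \<subseteq> {1..n}" using assms(1) unfolding K_class_def by auto
  then have "{A \<in> H. X \<subseteq> A \<and> 2 * card A \<le> n} \<subseteq> Pow {1..n}" by auto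
  then show "finite {A \<in> H. X \<subseteq> A \<and> 2 * card A \<le> n}" by (rule finite_subset) simp
  show "{A \<in> H. X \<subseteq> A \<and> 2 * card A \<le> n} \<noteq> {}" by fact
  show "{A \<in> H. X \<subseteq> A \<and> 2 * card A \<le> n} \<subseteq> {A \<in> H. X \<subseteq> A \<and> 2 * card A \<le> n}" by simp
  fix A B assume A: "A \<in> {A \<in> H. X \<subseteq> A \<and> 2 * card A \<le> n}" and B: "B \<in> {A \<in> H. X \<subseteq> A \<and> 2 * card A \<le> n}"
  have "A \<inter> B \<in> H" using pair_inter[OF assms(1)] A B by auto
  moreover have "finite B" using B \<open>\<forall>A\<in>H. A \<subseteq> {1..n}\<close> finite_subset[OF _ finite_atLeastAtMost] by blast
  then have "card (A \<inter> B) \<le> card B" by (simp add: card_mono)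
  ultimately show "A \<inter> B \<in> {A \<in> H. X \<subseteq> A \<and> 2 * card A \<le> n}" using A B by auto
qed

end
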